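(* Let $\theta>-1$, $\beta>0$, and let $\mathscr{L}_i^{(\theta,\beta)}$, $i=0,1,2,\dots$, denote the generalized Laguerre polynomials $$\mathscr{L}_i^{(\theta,\beta)}(x)=\frac{1}{i!}x^{-\theta}e^{\beta x}\frac{d^i}{dx^i}\big(x^{i+\theta}e^{-\beta x}\big).$$ Let $n$ be a positive integer and $\varrho:(0,\infty)\to\mathbb{R}$ with $n-1<\varrho_{\min}<\varrho(x)<\varrho_{\max}<n$ for all $x>0$. For a sufficiently smooth function $u$ on $[0,\infty)$ define the variable-order Caputo derivative $${}_0^{C}\mathscr{D}_x^{\varrho(x)}u(x)=\frac{1}{\Gamma(n-\varrho(x))}\int_0^x (x-t)^{n-\varrho(x)-1}u^{(n)}(t)\,dt,$$ and for a function $\mu:(0,\infty)\to(0,\infty)$, $\alpha>-1$ and $k\ge0$ let $$\hat{\mathscr{L}}_k^{(\mu(x),\alpha,\beta)}(x)=\frac{1}{\Gamma(\mu(x))}\int_0^x (x-t)^{\mu(x)-1}\mathscr{L}_k^{(\alpha,\beta)}(t)\,dt .$$ Then for every $N\ge0$ and real coefficients $\ell_0,\dots,\ell_N$, the polynomial $u_N=\sum_{i=0}^N \ell_i\mathscr{L}_i^{(\theta,\beta)}$ satisfies, for all $x>0$, $${}_0^{C}\mathscr{D}_x^{\varrho(x)}u_N(x)=\sum_{i=0}^N \ell_i\,D_{i,n,\theta,\beta}^{(\varrho(x))}(x),$$ where $D_{i,n,\theta,\beta}^{(\varrho(x))}(x)=0$ for $0\le i\le n-1$ and $$D_{i,n,\theta,\beta}^{(\varrho(x))}(x)=(-\beta)^n\,\hat{\mathscr{L}}_{i-n}^{(n-\varrho(x),\theta+n,\beta)}(x)\quad\text{for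 } i\ge n.$$
   Context: Here the fractional order $\varrho(x)$ (resp. $\mu(x)$) is frozen at the outer variable $x$ inside the integral. The generalized Laguerre polynomials are orthogonal on $(0,\infty)$ with respect to the weight $x^\theta e^{-\beta x}$. *)

theory Defs
  imports "HOL-Analysis.Analysis"
begin

text \<open>Generalized Laguerre polynomial via the Rodrigues formula (meaningful for x > 0).\<close>
definition gen_laguerre :: "real \<Rightarrow> real \<Rightarrow> nat \<Rightarrow> real \<Rightarrow> real" where
  "gen_laguerre \<theta> \<beta> i x =
     (1 / fact i) * x powr (-\<theta>) * exp (\<beta> * x) *
     (deriv ^^ i) (\<lambda>y. y powr (real i + \<theta>) * exp (- \<beta> * y)) x"

definition caputo_var :: "(real \<Rightarrow> real) \<Rightarrow> nat \<Rightarrow> (real \<Rightarrow> real) \<Rightarrow> real \<Rightarrow> real" where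
  "caputo_var \<rho> n u x =
     (1 / Gamma (real n - \<rho> x)) *
     integral {0..x} (\<lambda>t. (x - t) powr (real n - \<rho> x - 1) * (deriv ^^ n) u t)"

definition lag_hat :: "(real \<Rightarrow> real) \<Rightarrow> real \<Rightarrow> real \<Rightarrow> nat \<Rightarrow> real \<Rightarrow> real" where
  "lag_hat \<mu> \<alpha> \<beta> k x =
     (1 / Gamma (\<mu> x)) *
     integral {0..x} (\<lambda>t. (x - t) powr (\<mu> x - 1) * gen_laguerre \<alpha> \<beta> k t)"

definition D_coef :: "nat \<Rightarrow> nat \<Rightarrow> real \<Rightarrow> real \<Rightarrow> (real \<Rightarrow> real) \<Rightarrow> real \<Rightarrow> real" where
  "D_coef i n \<theta> \<beta> \<rho> x =
     (if i < n then 0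
      else (- \<beta>) ^ n * lag_hat (\<lambda>y. real n - \<rho> y) (\<theta> + real n) \<beta> (i - n) x)"

end

theory Submission
  imports Defs "HOL-Computational_Algebra.Polynomial"
begin

lemma deriv_chain:
  fixes g :: "nat \<Rightarrow> real \<Rightarrow> real"
  assumes "open S"
    and "\<And>k y. y \<in> S \<Longrightarrow> (g k has_real_derivative g (Suc k) y) (at y)"
    and "\<And>y. y \<in> S \<Longrightarrow> f y = g 0 y" and "y \<in> S"
  shows "(deriv ^^ k) f y = g k y"
  using assms(2-4)
proof (induction k arbitrary: f g y)
  case 0 then show ?case by simp
next
  case (Suc k)
  have d: "deriv f z = g 1 z" if "z \<in> S" for z
  proof -
    have "(g 0 has_real_derivative g 1 z) (at z)" using Suc.prems(1)[OF that] by simp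
    then have "(f has_real_derivative g 1 z) (at z)"
      by (rule has_field_derivative_transform_within_open[OF _ assms(1) that])
         (use Suc.prems(2) in auto)
    then show ?thesis by (rule DERIV_imp_deriv)
  qed
  have "(deriv ^^ Suc k) f y = (deriv ^^ k) (deriv f) y" by (simp only: funpow_Suc_right o_apply)
  also have "\<dots> = (\<lambda>j. g (Suc j)) k y"
    by (rule Suc.IH[where g="\<lambda>j. g (Suc j)"]) (use Suc.prems d in auto)
  finally show ?case by simp
qed

fun LP :: "real \<Rightarrow> real \<Rightarrow> nat \<Rightarrow> real poly" where
  "LP \<beta> a 0 = 1"
| "LP \<beta> a (Suc m) = smult (a - real m) (LP \<beta> a m) + [:0,1:] * (pderiv (LP \<beta> a m) - smult \<beta> (LP \<beta> a m))"

lemma LP_deriv: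
  assumes "y > 0"
  shows "((\<lambda>y. y powr (a - real m) * exp (- \<beta> * y) * poly (LP \<beta> a m) y) has_real_derivative
          (y powr (a - real (Suc m)) * exp (- \<beta> * y) * poly (LP \<beta> a (Suc m)) y)) (at y)"
proof -
  have e: "y powr (a - real m) = y * y powr (a - real (Suc m))"
  proof -
    have "y * y powr (a - real (Suc m)) = y powr (1::real) * y powr (a - real (Suc m))" using assms by simp
    also have "\<dots> = y powr (1 + (a - real (Suc m)))" by (simp only: powr_add)
    also have "1 + (a - real (Suc m)) = a - real m" by simp
    finally show ?thesis by simp
  qed
  have e2: "y powr (a - real m - 1) = y powr (a - real (Suc m))" by (simp add: algebra_simps)
  show ?thesis
  proof -
    have d1: "((\<lambda>y. y powr (a - real m)) has_real_derivative (a - real m) * y powr (a - real m - 1)) (at y)"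
      by (rule has_real_derivative_powr[OF assms])
    have d2: "((\<lambda>y. exp (- \<beta> * y)) has_real_derivative exp (- \<beta> * y) * (- \<beta>)) (at y)"
      by (rule derivative_eq_intros refl | simp)+
    have d3: "((\<lambda>y. poly (LP \<beta> a m) y) has_real_derivative poly (pderiv (LP \<beta> a m)) y) (at y)"
      by (rule poly_DERIV)
    show ?thesis
      apply (rule DERIV_cong[OF DERIV_mult[OF DERIV_mult[OF d1 d2] d3]])
      apply (simp add: e e2 algebra_simps)
      done
  qed
qed

lemma pderiv_LP: "pderiv (LP \<beta> a (Suc m)) = smult (- \<beta> * real (Suc m)) (LP \<beta> a m)"
proof (induction m)
  case 0 then show ?case by (simp add: pderiv_pCons)
next
  case (Suc m)
  show ?case
    apply (subst LP.simps(2))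
    apply (simp only: pderiv_add pderiv_smult pderiv_mult pderiv_diff Suc)
    apply (rule poly_eqI)
    apply (simp add: pderiv_pCons coeff_pCons algebra_simps split: nat.split)
    done
qed

definition Lpoly :: "real \<Rightarrow> real \<Rightarrow> nat \<Rightarrow> real poly" where
  "Lpoly \<theta> \<beta> i = smult (1 / fact i) (LP \<beta> (real i + \<theta>) i)"

lemma gen_lag_poly:
  assumes "y > 0"
  shows "gen_laguerre \<theta> \<beta> i y = poly (Lpoly \<theta> \<beta> i) y"
proof -
  define a where "a = real i + \<theta>"
  have "(deriv ^^ i) (\<lambda>y. y powr (real i + \<theta>) * exp (- \<beta> * y)) y
      = (\<lambda>k y. y powr (a - real k) * exp (- \<beta> * y) * poly (LP \<beta> a k) y) i y"
    by (rule deriv_chain[where S="{0<..}"]) (use assms LP_deriv in \<open>auto simp: a_def\<close>)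
  also have "\<dots> = y powr \<theta> * exp (- \<beta> * y) * poly (LP \<beta> a i) y" by (simp add: a_def)
  finally have d: "(deriv ^^ i) (\<lambda>y. y powr (real i + \<theta>) * exp (- \<beta> * y)) y
      = y powr \<theta> * exp (- \<beta> * y) * poly (LP \<beta> a i) y" .
  have p: "y powr (- \<theta>) * y powr \<theta> = 1" using assms by (simp add: powr_add[symmetric])
  have q: "exp (\<beta> * y) * exp (- \<beta> * y) = 1" by (simp add: exp_add[symmetric])
  have "gen_laguerre \<theta> \<beta> i y = (1 / fact i) * (y powr (- \<theta>) * y powr \<theta>) *
        (exp (\<beta> * y) * exp (- \<beta> * y)) * poly (LP \<beta> a i) y"
    unfolding gen_laguerre_def d by (simp add: algebra_simps)
  also have "\<dots> = poly (Lpoly \<theta> \<beta> i) y" unfolding p q Lpoly_def a_def by simp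
  finally show ?thesis .
qed

lemma pderiv_Lpoly: "pderiv (Lpoly \<theta> \<beta> (Suc i)) = smult (- \<beta>) (Lpoly (\<theta> + 1) \<beta> i)"
proof -
  have e: "real (Suc i) + \<theta> = real i + (\<theta> + 1)" by simp
  have c: "(1 / fact (Suc i)) * (- \<beta> * real (Suc i)) = - \<beta> * (1 / (fact i :: real))"
  proof -
    have n: "real (Suc i) \<noteq> 0" "(fact i::real) \<noteq> 0" by simp_all
    show ?thesis by (simp only: fact_Suc of_nat_mult) (simp add: n field_simps del: of_nat_Suc)
  qed
  show ?thesis unfolding Lpoly_def pderiv_smult e pderiv_LP
    by (simp only: smult_smult c)
qed

lemma higher_pderiv_Lpoly:
  "(pderiv ^^ n) (Lpoly \<theta> \<beta> i) = (if i < n then 0 else smult ((- \<beta>) ^ n) (Lpoly (\<theta> + real n) \<beta> (i - n)))"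
proof (induction n arbitrary: \<theta> i)
  case 0 then show ?case by simp
next
  case (Suc n)
  show ?case
  proof (cases i)
    case 0
    have "pderiv (Lpoly \<theta> \<beta> 0) = 0" by (simp add: Lpoly_def)
    then show ?thesis using 0 by (simp only: funpow_Suc_right o_apply) simp
  next
    case (Suc j)
    have e: "\<theta> + 1 + real n = \<theta> + real (Suc n)" by simp
    show ?thesis using Suc
      by (simp only: funpow_Suc_right o_apply pderiv_Lpoly higher_pderiv_smult Suc.IH e) simp
  qed
qed

lemma kernel_integrable:
  assumes "c > -1" "x > (0::real)"
  shows "(\<lambda>t. (x - t) powr c) integrable_on {0..x}"
proof -
  have h1: "(\<lambda>s. s powr c) integrable_on cbox 0 x"
    using integrable_on_powr_from_0[of c x] assms by simp
  have "(\<lambda>t. (\<lambda>s. s powr c) ((-1) *\<^sub>R t + x)) integrable_on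
        ((\<lambda>t. (1 / (-1)) *\<^sub>R t - ((1 / (-1)) *\<^sub>R x)) ` cbox 0 x)"
    by (rule integrable_on_affinity[OF _ h1]) simp
  moreover have "((\<lambda>t. (1 / (-1)) *\<^sub>R t - ((1 / (-1)) *\<^sub>R x)) ` cbox 0 x) = {0..x}"
  proof (rule set_eqI, rule iffI)
    fix t assume "t \<in> {0..x}"
    then show "t \<in> (\<lambda>t. (1 / (-1)) *\<^sub>R t - ((1 / (-1)) *\<^sub>R x)) ` cbox 0 x"
      by (intro image_eqI[where x="x - t"]) auto
  qed auto
  ultimately show ?thesis by simp
qed

lemma lag_integrable:
  assumes "c > -1" "x > (0::real)"
  shows "(\<lambda>t. (x - t) powr c * gen_laguerre \<theta> \<beta> k t) integrable_on {0..x}"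
proof -
  have a: "(\<lambda>t. (x - t) powr c) absolutely_integrable_on {0..x}"
    by (rule nonnegative_absolutely_integrable_1[OF kernel_integrable[OF assms]]) simp
  have m: "(\<lambda>t. poly (Lpoly \<theta> \<beta> k) t) \<in> borel_measurable (lebesgue_on {0..x})"
    by (rule continuous_imp_measurable_on_sets_lebesgue) (auto intro: continuous_intros)
  have b: "bounded ((\<lambda>t. poly (Lpoly \<theta> \<beta> k) t) ` {0..x})"
    by (intro compact_imp_bounded compact_continuous_image) (auto intro: continuous_intros)
  have "(\<lambda>t. poly (Lpoly \<theta> \<beta> k) t * (x - t) powr c) absolutely_integrable_on {0..x}"
    by (rule absolutely_integrable_bounded_measurable_product_real[OF m _ b a]) simp
  then have i: "(\<lambda>t. poly (Lpoly \<theta> \<beta> k) t * (x - t) powr c) integrable_on {0..x}"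
    using set_lebesgue_integral_eq_integral(1) by blast
  show ?thesis
    by (rule integrable_spike[OF i, of "{0}"]) (auto simp: gen_lag_poly)
qed

theorem mainTheorem2:
  fixes \<theta> \<beta> \<rho>min \<rho>max :: real and n N :: nat and \<rho> :: "real \<Rightarrow> real"
    and l :: "nat \<Rightarrow> real" and x :: real
  assumes "\<theta> > -1" and "\<beta> > 0" and "n > 0"
    and "real n - 1 < \<rho>min" and "\<rho>max < real n"
    and "\<And>y. y > 0 \<Longrightarrow> \<rho>min < \<rho> y \<and> \<rho> y < \<rho>max"
    and "x > 0"
  shows "caputo_var \<rho> n (\<lambda>y. \<Sum>i\<le>N. l i * gen_laguerre \<theta> \<beta> i y) x
         = (\<Sum>i\<le>N. l i * D_coef i n \<theta> \<beta> \<rho> x)"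
proof -
  define c where "c = real n - \<rho> x - 1"
  have c: "c > -1" using assms(5-7) unfolding c_def by force
  define u where "u = (\<lambda>y. \<Sum>i\<le>N. l i * gen_laguerre \<theta> \<beta> i y)"
  define U where "U = (\<Sum>i\<le>N. smult (l i) (Lpoly \<theta> \<beta> i))"
  define G where "G = (\<lambda>i t. if i < n then 0 else (- \<beta>) ^ n * ((x - t) powr c * gen_laguerre (\<theta> + real n) \<beta> (i - n) t))"
  have du: "(deriv ^^ n) u t = (\<Sum>i\<le>N. l i * (if i < n then 0 else (- \<beta>) ^ n * gen_laguerre (\<theta> + real n) \<beta> (i - n) t))"
    if t: "t > 0" for t
  proof -
    have "(deriv ^^ n) u t = (\<lambda>k y. poly ((pderiv ^^ k) U) y) n t"
    proof (rule deriv_chain[where S="{0<..}"])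
      show "((\<lambda>k y. poly ((pderiv ^^ k) U) y) k has_real_derivative (\<lambda>k y. poly ((pderiv ^^ k) U) y) (Suc k) y) (at y)" for k y
        by (simp add: poly_DERIV)
      show "u y = (\<lambda>k y. poly ((pderiv ^^ k) U) y) 0 y" if "y \<in> {0<..}" for y
        using that by (simp add: u_def U_def poly_sum gen_lag_poly)
    qed (use t in auto)
    also have "\<dots> = (\<Sum>i\<le>N. l i * poly ((pderiv ^^ n) (Lpoly \<theta> \<beta> i)) t)"
      by (simp add: U_def higher_pderiv_sum higher_pderiv_smult poly_sum)
    also have "\<dots> = (\<Sum>i\<le>N. l i * (if i < n then 0 else (- \<beta>) ^ n * gen_laguerre (\<theta> + real n) \<beta> (i - n) t))"
      by (rule sum.cong) (use t in \<open>auto simp: higher_pderiv_Lpoly gen_lag_poly\<close>)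
    finally show ?thesis .
  qed
  have Gi: "G i integrable_on {0..x}" for i
    unfolding G_def using integrable_on_mult_right[OF lag_integrable[OF c assms(7)]] by (cases "i < n") auto
  have "integral {0..x} (\<lambda>t. (x - t) powr c * (deriv ^^ n) u t)
      = integral {0..x} (\<lambda>t. \<Sum>i\<le>N. l i * G i t)"
    by (rule integral_spike[of "{0}"]) (auto simp: du G_def sum_distrib_left algebra_simps intro!: sum.cong)
  also have "\<dots> = (\<Sum>i\<le>N. l i * integral {0..x} (G i))"
    by (subst integral_sum) (auto intro: integrable_on_mult_right Gi)
  finally have I: "integral {0..x} (\<lambda>t. (x - t) powr c * (deriv ^^ n) u t) = (\<Sum>i\<le>N. l i * integral {0..x} (G i))" .
  have DG: "D_coef i n \<theta> \<beta> \<rho> x = (1 / Gamma (real n - \<rho> x)) * integral {0..x} (G i)" for i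
    unfolding D_coef_def lag_hat_def G_def c_def by simp
  show ?thesis
    unfolding caputo_var_def u_def[symmetric] c_def[symmetric] I DG sum_distrib_left
    by (simp add: algebra_simps)
qed

end
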